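(* Let $L=\sum_{k=1}^m P_{n_k}$ be a linear forest and $n$ a positive integer. Then $L\in\operatorname{obs}(P_n)$ if and only if one of the following holds: (1) $\mu(L)=n+1$ and $n_k=2$ for all $k\in\{1,\dots,m\}$; (2) $\mu(L)=n+1$, $n_k\in\{1,2,4,6\}$ for all $k$, and $m_1=1$; (3) $\mu(L)=n+2$, $n_k\in\{1,2,4\}$ for all $k$, and $m_1=1$.
   Context: All graphs are finite, simple and loopless. $P_n$ denotes the path on $n$ vertices ($P_1=K_1$, $P_2=K_2$). A linear forest is a disjoint union of paths; $\sum_{k=1}^m P_{n_k}$ denotes the linear forest whose $k$-th component is the path on $n_k$ vertices, and $m_i$ denotes the number of indices $k$ with $n_k=i$. A full-homomorphism $\varphi\colon G\to H$ is a map $V(G)\to V(H)$ such that for all $x,y\in V(G)$, $xy\in E(G)$ if and only if $\varphi(x)\varphi(y)\in E(H)$. A full $H$-colouring of $G$ is a full-homomorphism $G\to H$. A minimal $H$-obstruction is a graph $G$ that admits no full $H$-colouring while every proper induced subgraph of $G$ admits one; $\operatorname{obs}(H)$ denotes the set of minimal $H$-obstructions (up to isomorphism). For a linear forest $L$, $\mu(L)$ is the minimum integer $n$ such that there is an injective full-homomorphism from $L$ to $P_n$. *)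

theory Defs
  imports Main
begin

type_synonym 'a graph = "'a set \<times> ('a \<Rightarrow> 'a \<Rightarrow> bool)"

definition verts :: "'a graph \<Rightarrow> 'a set" where
  "verts G = fst G"

definition adj :: "'a graph \<Rightarrow> 'a \<Rightarrow> 'a \<Rightarrow> bool" where
  "adj G = snd G"

definition full_hom :: "'a graph \<Rightarrow> 'b graph \<Rightarrow> ('a \<Rightarrow> 'b) \<Rightarrow> bool" where
  "full_hom G H f \<longleftrightarrow>
     (\<forall>x\<in>verts G. f x \<in> verts H) \<and>
     (\<forall>x\<in>verts G. \<forall>y\<in>verts G. adj G x y \<longleftrightarrow> adj H (f x) (f y))"

definition induced_subgraph :: "'a graph \<Rightarrow> 'a set \<Rightarrow> 'a graph" where
  "induced_subgraph G S = (S \<inter> verts G, \<lambda>x y. x \<in> S \<and> y \<in> S \<and> adj G x y)"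

definition min_obs :: "'a graph \<Rightarrow> 'b graph \<Rightarrow> bool" where
  "min_obs G H \<longleftrightarrow>
     \<not> (\<exists>f. full_hom G H f) \<and>
     (\<forall>S. S \<subset> verts G \<longrightarrow> (\<exists>f. full_hom (induced_subgraph G S) H f))"

definition path_graph :: "nat \<Rightarrow> nat graph" where
  "path_graph n = ({0..<n}, \<lambda>i j. i < n \<and> j < n \<and> (i + 1 = j \<or> j + 1 = i))"

text \<open>The linear forest sum_k P_{n_k}, given by the list [n_1,...,n_m];
vertex (k,i) is the i-th vertex of the k-th path.\<close>
definition linear_forest :: "nat list \<Rightarrow> (nat \<times> nat) graph" where
  "linear_forest ns =
     ({(k, i). k < length ns \<and> i < ns ! k},
      \<lambda>(k, i) (k', i'). k < length ns \<and> k' = k \<and> i < ns ! k \<and> i' < ns ! k \<and>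
                         (i + 1 = i' \<or> i' + 1 = i))"

definition mu :: "'a graph \<Rightarrow> nat" where
  "mu L = (LEAST n. \<exists>f. inj_on f (verts L) \<and> full_hom L (path_graph n) f)"

end

theory Submission
  imports Defs
begin


lemma adj_lf: "adj (linear_forest ns) (k,i) (k',j) \<longleftrightarrow>
   k < length ns \<and> k' = k \<and> i < ns!k \<and> j < ns!k \<and> (i+1=j \<or> j+1=i)"
  by (auto simp: adj_def linear_forest_def)

lemma verts_lf: "(k,i) \<in> verts (linear_forest ns) \<longleftrightarrow> k < length ns \<and> i < ns!k"
  by (auto simp: verts_def linear_forest_def)

lemma adj_pg: "adj (path_graph n) a b \<longleftrightarrow> a < n \<and> b < n \<and> (a+1=b \<or> b+1=a)"
  by (auto simp: adj_def path_graph_def)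

lemma verts_pg: "verts (path_graph n) = {0..<n}"
  by (auto simp: verts_def path_graph_def)

lemma verts_ind: "verts (induced_subgraph G S) = S \<inter> verts G"
  by (simp add: verts_def induced_subgraph_def)

lemma adj_ind: "adj (induced_subgraph G S) x y \<longleftrightarrow> x \<in> S \<and> y \<in> S \<and> adj G x y"
  by (simp add: adj_def induced_subgraph_def)

lemma full_hom_comp: "full_hom G H f \<Longrightarrow> full_hom H K g \<Longrightarrow> full_hom G K (g \<circ> f)"
  unfolding full_hom_def by auto

lemma full_hom_transfer:
  assumes "full_hom G H f" "full_hom H G g"
  shows "(\<exists>h. full_hom G K h) \<longleftrightarrow> (\<exists>h. full_hom H K h)"
  using full_hom_comp[OF assms(1)] full_hom_comp[OF assms(2)] by blast

lemma full_hom_sub: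
  assumes "S \<subseteq> T"
  shows "full_hom (induced_subgraph G S) (induced_subgraph G T) id"
  using assms unfolding full_hom_def by (auto simp: verts_ind adj_ind)

lemma twin:
  assumes "full_hom G H f" "x \<in> verts G" "y \<in> verts G" "f x = f y" "z \<in> verts G"
  shows "adj G x z \<longleftrightarrow> adj G y z"
proof -
  have h: "\<forall>x\<in>verts G. \<forall>y\<in>verts G. adj G x y \<longleftrightarrow> adj H (f x) (f y)"
    using assms(1) unfolding full_hom_def by (rule conjunct2)
  have "adj G x z \<longleftrightarrow> adj H (f x) (f z)" using bspec[OF bspec[OF h assms(2)] assms(5)] .
  also have "\<dots> \<longleftrightarrow> adj H (f y) (f z)" using assms(4) by simp
  also have "\<dots> \<longleftrightarrow> adj G y z" using bspec[OF bspec[OF h assms(3)] assms(5)] by simp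
  finally show ?thesis .
qed

definition sepd :: "nat set \<Rightarrow> nat set \<Rightarrow> bool" where
  "sepd X Y \<longleftrightarrow> (\<forall>a\<in>X. \<forall>b\<in>Y. a \<noteq> b \<and> a \<noteq> Suc b \<and> b \<noteq> Suc a)"

lemma card_plus: assumes "finite X" "X \<noteq> {}" shows "card X + 1 \<le> card (X \<union> Suc ` X)"
proof -
  have "Suc (Max X) \<notin> X"
  proof
    assume "Suc (Max X) \<in> X"
    hence "Suc (Max X) \<le> Max X" using Max_ge[OF assms(1)] by blast
    thus False by simp
  qed
  moreover have "Suc (Max X) \<in> Suc ` X" using assms by simp
  ultimately have "card (insert (Suc (Max X)) X) = card X + 1" using assms by simp
  moreover have "insert (Suc (Max X)) X \<subseteq> X \<union> Suc ` X" using \<open>Suc (Max X) \<in> Suc ` X\<close> by blast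
  moreover have "finite (X \<union> Suc ` X)" using assms by simp
  ultimately show ?thesis using card_mono[of "X \<union> Suc ` X" "insert (Suc (Max X)) X"] by linarith
qed

lemma sepd_disj: "sepd X Y \<Longrightarrow> (X \<union> Suc ` X) \<inter> (Y \<union> Suc ` Y) = {}"
  unfolding sepd_def by auto

lemma sep_count:
  assumes A: "\<forall>X\<in>F. X \<noteq> {} \<and> X \<subseteq> {..<n}"
    and B: "\<forall>X\<in>F. \<forall>Y\<in>F. X \<noteq> Y \<longrightarrow> sepd X Y"
  shows "(\<Sum>X\<in>F. card X + 1) \<le> n + 1"
proof -
  have sub: "X \<subseteq> {..<n}" and ne: "X \<noteq> {}" if "X \<in> F" for X using A that by blast+
  have finX: "finite X" if "X \<in> F" for X using finite_subset[OF sub[OF that] finite_lessThan] .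
  have "F \<subseteq> Pow {..<n}" using sub by blast
  hence fin: "finite F" by (rule finite_subset) simp
  define P where "P X = X \<union> Suc ` X" for X :: "nat set"
  have "card (\<Union>(P ` F)) = (\<Sum>X\<in>F. card (P X))"
  proof (rule card_UN_disjoint[OF fin])
    show "\<forall>i\<in>F. finite (P i)" unfolding P_def using finX by simp
    show "\<forall>i\<in>F. \<forall>j\<in>F. i \<noteq> j \<longrightarrow> P i \<inter> P j = {}"
    proof (intro ballI impI)
      fix i j assume "i \<in> F" "j \<in> F" "i \<noteq> j"
      hence "sepd i j" using B by blast
      thus "P i \<inter> P j = {}" unfolding P_def by (rule sepd_disj)
    qed
  qed
  moreover have "\<Union>(P ` F) \<subseteq> {..n}"
  proof
    fix z assume "z \<in> \<Union>(P ` F)"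
    then obtain X where X: "X \<in> F" "z \<in> X \<union> Suc ` X" unfolding P_def by blast
    have "X \<subseteq> {..<n}" using sub[OF X(1)] .
    thus "z \<in> {..n}" using X(2) by auto
  qed
  hence "card (\<Union>(P ` F)) \<le> card {..n}" by (intro card_mono) simp_all
  hence "card (\<Union>(P ` F)) \<le> n + 1" by simp
  moreover have "(\<Sum>X\<in>F. card X + 1) \<le> (\<Sum>X\<in>F. card (P X))"
  proof (rule sum_mono)
    fix X assume "X \<in> F"
    thus "card X + 1 \<le> card (P X)" unfolding P_def using card_plus finX ne by blast
  qed
  ultimately show ?thesis by linarith
qed



definition cost2 :: "nat \<Rightarrow> nat" where "cost2 s = (if s \<le> 1 then 0 else if s = 3 then 3 else s + 1)"
definition one :: "nat \<Rightarrow> nat" where "one s = (if s = 1 then 1 else 0)"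
definition ic :: "nat \<Rightarrow> nat" where "ic s = (if s = 0 then 0 else s + 1)"
definition As :: "nat list \<Rightarrow> nat" where "As ns = sum_list (map cost2 ns)"
definition C1 :: "nat list \<Rightarrow> nat" where "C1 ns = sum_list (map one ns)"
definition Nc :: "nat list \<Rightarrow> nat" where "Nc ns = As ns + (if C1 ns > 0 then 2 else 0)"
definition IC :: "nat list \<Rightarrow> nat" where "IC ns = sum_list (map ic ns)"
definition pre :: "(nat \<Rightarrow> nat) \<Rightarrow> nat list \<Rightarrow> nat \<Rightarrow> nat" where
  "pre h xs k = sum_list (map h (take k xs))"

lemma pre_step: "k < length xs \<Longrightarrow> pre h xs (Suc k) = pre h xs k + h (xs!k)"
  by (simp add: pre_def take_Suc_conv_app_nth)

lemma pre_mono: "k \<le> k' \<Longrightarrow> pre h xs k \<le> pre h xs k'"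
proof -
  assume "k \<le> k'"
  then obtain d where "k' = k + d" by (metis le_add_diff_inverse)
  thus ?thesis by (simp add: pre_def take_add)
qed

lemma pre_len: "pre h xs (length xs) = sum_list (map h xs)"
  by (simp add: pre_def)

lemma pre_le: "pre h xs k \<le> sum_list (map h xs)"
  by (metis pre_len pre_mono take_all nle_le pre_def)

lemma C1_pos: "0 < C1 ns \<longleftrightarrow> 1 \<in> set ns"
  by (induction ns) (auto simp: C1_def one_def)

lemma inj_constr:
  assumes "IC ns \<le> n + 1"
  shows "\<exists>f. inj_on f (verts (linear_forest ns)) \<and> full_hom (linear_forest ns) (path_graph n) f"
proof -
  define f where "f = (\<lambda>(k,i). pre ic ns k + i)"
  have bnd: "f (k,i) + 2 \<le> pre ic ns (Suc k)" if "k < length ns" "i < ns!k" for k i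
    using that by (simp add: f_def pre_step ic_def)
  have lt: "f (k,i) < n" if "k < length ns" "i < ns!k" for k i
    using bnd[OF that] pre_le[of ic ns "Suc k"] assms by (simp add: IC_def)
  have far: "f (k,i) + 2 \<le> f (k',j)" if "k < length ns" "i < ns!k" "k < k'" for k i k' j
    using bnd[OF that(1,2)] pre_mono[of "Suc k" k' ic ns] that(3) by (simp add: f_def)
  have "inj_on f (verts (linear_forest ns))"
  proof (rule inj_onI)
    fix x y assume "x \<in> verts (linear_forest ns)" "y \<in> verts (linear_forest ns)" "f x = f y"
    then obtain k i k' j where xy: "x = (k,i)" "y = (k',j)" "k < length ns" "i < ns!k" "k' < length ns" "j < ns!k'"
      by (cases x, cases y) (simp add: verts_lf)
    show "x = y"
    proof (cases k k' rule: linorder_cases)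
      case less thus ?thesis using far[OF xy(3,4) less, of j] \<open>f x = f y\<close> xy by simp
    next
      case greater thus ?thesis using far[OF xy(5,6) greater, of i] \<open>f x = f y\<close> xy by simp
    next
      case equal thus ?thesis using \<open>f x = f y\<close> xy by (simp add: f_def)
    qed
  qed
  moreover have "full_hom (linear_forest ns) (path_graph n) f"
    unfolding full_hom_def
  proof (intro conjI ballI)
    fix x assume "x \<in> verts (linear_forest ns)"
    then obtain k i where "x = (k,i)" "k < length ns" "i < ns!k" by (cases x) (simp add: verts_lf)
    thus "f x \<in> verts (path_graph n)" using lt by (simp add: verts_pg)
  next
    fix x y assume "x \<in> verts (linear_forest ns)" "y \<in> verts (linear_forest ns)"
    then obtain k i k' j where xy: "x = (k,i)" "y = (k',j)" "k < length ns" "i < ns!k" "k' < length ns" "j < ns!k'"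
      by (cases x, cases y) (simp add: verts_lf)
    show "adj (linear_forest ns) x y \<longleftrightarrow> adj (path_graph n) (f x) (f y)"
    proof (cases k k' rule: linorder_cases)
      case less thus ?thesis using far[OF xy(3,4) less, of j] xy by (auto simp: adj_lf adj_pg)
    next
      case greater thus ?thesis using far[OF xy(5,6) greater, of i] xy by (auto simp: adj_lf adj_pg)
    next
      case equal thus ?thesis using xy lt[OF xy(3,4)] lt[OF xy(5,6)] by (auto simp: adj_lf adj_pg f_def)
    qed
  qed
  ultimately show ?thesis by blast
qed

definition gg :: "nat \<Rightarrow> nat \<Rightarrow> nat" where "gg s i = (if s = 3 \<and> i = 2 then 0 else i)"

lemma gadj: assumes "i < s" "j < s"
  shows "(i+1=j \<or> j+1=i) \<longleftrightarrow> (gg s i + 1 = gg s j \<or> gg s j + 1 = gg s i)"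
proof (cases "s = 3")
  case True
  hence "i \<in> {0,1,2}" "j \<in> {0,1,2}" using assms by auto
  thus ?thesis using True by (auto simp: gg_def)
qed (simp add: gg_def)

lemma col_constr:
  assumes "Nc ns \<le> n + 1"
  shows "\<exists>f. full_hom (linear_forest ns) (path_graph n) f"
proof -
  define f where "f = (\<lambda>(k,i). if ns!k = 1 then As ns else pre cost2 ns k + gg (ns!k) i)"
  have bnd: "f (k,i) + 2 \<le> pre cost2 ns (Suc k)" if "k < length ns" "i < ns!k" "ns!k \<noteq> 1" for k i
    using that by (auto simp: f_def pre_step cost2_def gg_def)
  have Ale: "As ns \<le> n + 1" using assms by (simp add: Nc_def)
  have lt2: "f (k,i) + 2 \<le> As ns" if "k < length ns" "i < ns!k" "ns!k \<noteq> 1" for k i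
    using bnd[OF that] pre_le[of cost2 ns "Suc k"] by (simp add: As_def)
  have iso: "As ns < n" if "k < length ns" "ns!k = 1" for k
  proof -
    have "C1 ns > 0" using nth_mem[OF that(1)] that C1_pos by simp
    thus ?thesis using assms by (simp add: Nc_def)
  qed
  have lt: "f (k,i) < n" if "k < length ns" "i < ns!k" for k i
  proof (cases "ns!k = 1")
    case True thus ?thesis using iso[OF that(1)] by (simp add: f_def)
  next
    case False thus ?thesis using lt2[OF that False] Ale by linarith
  qed
  have far: "f (k,i) + 2 \<le> f (k',j)" if "k < length ns" "i < ns!k" "k < k'" "ns!k \<noteq> 1" "k' < length ns" for k i k' j
  proof (cases "ns!k' = 1")
    case True thus ?thesis using lt2[OF that(1,2,4)] by (simp add: f_def)
  next
    case False thus ?thesis using bnd[OF that(1,2,4)] pre_mono[of "Suc k" k' cost2 ns] that(3)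
      by (simp add: f_def)
  qed
  have "full_hom (linear_forest ns) (path_graph n) f"
    unfolding full_hom_def
  proof (intro conjI ballI)
    fix x assume "x \<in> verts (linear_forest ns)"
    then obtain k i where "x = (k,i)" "k < length ns" "i < ns!k" by (cases x) (simp add: verts_lf)
    thus "f x \<in> verts (path_graph n)" using lt by (simp add: verts_pg)
  next
    fix x y assume "x \<in> verts (linear_forest ns)" "y \<in> verts (linear_forest ns)"
    then obtain k i k' j where xy: "x = (k,i)" "y = (k',j)" "k < length ns" "i < ns!k" "k' < length ns" "j < ns!k'"
      by (cases x, cases y) (simp add: verts_lf)
    show "adj (linear_forest ns) x y \<longleftrightarrow> adj (path_graph n) (f x) (f y)"
    proof (cases "k = k'")
      case True
      show ?thesis
      proof (cases "ns!k = 1")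
        case True thus ?thesis using xy \<open>k = k'\<close> by (simp add: adj_lf adj_pg f_def)
      next
        case False
        have e: "f x = pre cost2 ns k + gg (ns!k) i" "f y = pre cost2 ns k + gg (ns!k) j"
          using xy \<open>k = k'\<close> False by (simp_all add: f_def)
        have "adj (linear_forest ns) x y \<longleftrightarrow> (i+1=j \<or> j+1=i)" using xy \<open>k = k'\<close> by (simp add: adj_lf)
        also have "\<dots> \<longleftrightarrow> (gg (ns!k) i + 1 = gg (ns!k) j \<or> gg (ns!k) j + 1 = gg (ns!k) i)"
          using gadj xy \<open>k = k'\<close> by simp
        also have "\<dots> \<longleftrightarrow> adj (path_graph n) (f x) (f y)"
          using e lt[OF xy(3,4)] lt[OF xy(5,6)] xy by (simp add: adj_pg)
        finally show ?thesis .
      qed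
    next
      case ne: False
      show ?thesis
      proof (cases "ns!k = 1 \<and> ns!k' = 1")
        case True thus ?thesis using xy ne by (auto simp: adj_lf adj_pg f_def)
      next
        case False
        hence "ns!k \<noteq> 1 \<or> ns!k' \<noteq> 1" by simp
        hence "f x + 2 \<le> f y \<or> f y + 2 \<le> f x"
        proof
          assume "ns!k \<noteq> 1"
          show ?thesis
          proof (cases "k < k'")
            case True thus ?thesis using far[OF xy(3,4) True \<open>ns!k \<noteq> 1\<close> xy(5)] xy by simp
          next
            case False
            hence "k' < k" using ne by simp
            show ?thesis
            proof (cases "ns!k' = 1")
              case True thus ?thesis using lt2[OF xy(3,4) \<open>ns!k \<noteq> 1\<close>] xy by (simp add: f_def)
            next
              case False thus ?thesis using far[OF xy(5,6) \<open>k' < k\<close> False xy(3)] xy by simp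
            qed
          qed
        next
          assume "ns!k' \<noteq> 1"
          show ?thesis
          proof (cases "k' < k")
            case True thus ?thesis using far[OF xy(5,6) True \<open>ns!k' \<noteq> 1\<close> xy(3)] xy by simp
          next
            case False
            hence "k < k'" using ne by simp
            show ?thesis
            proof (cases "ns!k = 1")
              case True thus ?thesis using lt2[OF xy(5,6) \<open>ns!k' \<noteq> 1\<close>] xy by (simp add: f_def)
            next
              case False thus ?thesis using far[OF xy(3,4) \<open>k < k'\<close> False xy(5)] xy by simp
            qed
          qed
        qed
        thus ?thesis using xy ne by (auto simp: adj_lf adj_pg)
      qed
    qed
  qed
  thus ?thesis by blast
qed



definition Bk :: "(nat \<times> nat \<Rightarrow> nat) \<Rightarrow> nat list \<Rightarrow> nat \<Rightarrow> nat set" where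
  "Bk f ns k = (\<lambda>i. f (k,i)) ` {..<ns!k}"

lemma fh_verts: "full_hom G H f \<Longrightarrow> x \<in> verts G \<Longrightarrow> f x \<in> verts H"
  unfolding full_hom_def by blast

lemma fh_adj: "full_hom G H f \<Longrightarrow> x \<in> verts G \<Longrightarrow> y \<in> verts G \<Longrightarrow> adj G x y \<longleftrightarrow> adj H (f x) (f y)"
  unfolding full_hom_def by blast

lemma lb_lt: assumes "full_hom (linear_forest ns) (path_graph n) f" "k < length ns" "i < ns!k"
  shows "f (k,i) < n"
  using fh_verts[OF assms(1)] assms(2,3) by (simp add: verts_lf verts_pg)

lemma lb_sub: assumes "full_hom (linear_forest ns) (path_graph n) f" "k < length ns"
  shows "Bk f ns k \<subseteq> {..<n}"
  using lb_lt[OF assms] unfolding Bk_def by auto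

lemma lb_sep: assumes fh: "full_hom (linear_forest ns) (path_graph n) f"
  and k: "k < length ns" "i < ns!k" and k': "k' < length ns" "j < ns!k'" and ne: "k \<noteq> k'"
  shows "f (k,i) \<noteq> Suc (f (k',j)) \<and> (f (k,i) = f (k',j) \<longrightarrow> ns!k = 1)"
proof -
  have vx: "(k,i) \<in> verts (linear_forest ns)" using k by (simp add: verts_lf)
  have vy: "(k',j) \<in> verts (linear_forest ns)" using k' by (simp add: verts_lf)
  have "\<not> adj (linear_forest ns) (k',j) (k,i)" using ne by (simp add: adj_lf)
  hence "\<not> adj (path_graph n) (f (k',j)) (f (k,i))" using fh_adj[OF fh vy vx] by simp
  hence 1: "f (k,i) \<noteq> Suc (f (k',j))" using lb_lt[OF fh k] lb_lt[OF fh k'] by (simp add: adj_pg)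
  have 2: "ns!k = 1" if eq: "f (k,i) = f (k',j)"
  proof (rule ccontr)
    assume "ns!k \<noteq> 1"
    hence s2: "ns!k \<ge> 2" using k by linarith
    define z where "z = (k, if i + 1 < ns!k then i + 1 else i - 1)"
    have vz: "z \<in> verts (linear_forest ns)" using k unfolding z_def by (auto simp: verts_lf)
    have "adj (linear_forest ns) (k,i) z" using k s2 unfolding z_def by (auto simp: adj_lf)
    hence "adj (linear_forest ns) (k',j) z" using twin[OF fh vx vy eq vz] by simp
    thus False using ne unfolding z_def by (simp add: adj_lf)
  qed
  show ?thesis using 1 2 by blast
qed

lemma lb_inj: assumes fh: "full_hom (linear_forest ns) (path_graph n) f"
  and k: "k < length ns" and s: "ns!k \<noteq> 3"
  shows "inj_on (\<lambda>i. f (k,i)) {..<ns!k}"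
proof -
  have main: False if ij: "i < j" "j < ns!k" "f (k,i) = f (k,j)" for i j
  proof -
    have v: "(k,a) \<in> verts (linear_forest ns)" if "a < ns!k" for a using k that by (simp add: verts_lf)
    have tw: "adj (linear_forest ns) (k,i) (k,a) \<longleftrightarrow> adj (linear_forest ns) (k,j) (k,a)" if "a < ns!k" for a
      using twin[OF fh v[of i] v[of j] ij(3) v[OF that]] ij by simp
    have "adj (linear_forest ns) (k,i) (k,i+1)" using k ij by (simp add: adj_lf)
    hence "adj (linear_forest ns) (k,j) (k,i+1)" using tw[of "i+1"] ij by simp
    hence j2: "j = i + 2" using ij by (auto simp: adj_lf)
    have i0: "i = 0"
    proof (rule ccontr)
      assume "i \<noteq> 0"
      hence "adj (linear_forest ns) (k,i) (k,i-1)" using k ij by (auto simp: adj_lf)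
      hence "adj (linear_forest ns) (k,j) (k,i-1)" using tw[of "i-1"] ij by simp
      thus False using j2 by (auto simp: adj_lf)
    qed
    have "ns!k \<ge> 4" using s ij j2 i0 by simp
    hence "adj (linear_forest ns) (k,j) (k,3)" using k j2 i0 by (simp add: adj_lf)
    hence "adj (linear_forest ns) (k,i) (k,3)" using tw[of 3] \<open>ns!k \<ge> 4\<close> by simp
    thus False using i0 by (simp add: adj_lf)
  qed
  show ?thesis
  proof (rule inj_onI)
    fix i j assume "i \<in> {..<ns!k}" "j \<in> {..<ns!k}" "f (k,i) = f (k,j)"
    thus "i = j" using main[of i j] main[of j i] by (cases i j rule: linorder_cases) auto
  qed
qed

lemma lb_card: assumes fh: "full_hom (linear_forest ns) (path_graph n) f"
  and k: "k < length ns" and s: "ns!k \<ge> 2"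
  shows "cost2 (ns!k) \<le> card (Bk f ns k) + 1"
proof (cases "ns!k = 3")
  case True
  have v: "(k,a) \<in> verts (linear_forest ns)" if "a < ns!k" for a using k that by (simp add: verts_lf)
  have "adj (linear_forest ns) (k,0) (k,1)" using k True by (simp add: adj_lf)
  hence "adj (path_graph n) (f (k,0)) (f (k,1))" using fh_adj[OF fh v v] True by simp
  hence "f (k,0) \<noteq> f (k,1)" by (auto simp: adj_pg)
  moreover have "{f (k,0), f (k,1)} \<subseteq> Bk f ns k" using True unfolding Bk_def by auto
  ultimately have "2 \<le> card (Bk f ns k)"
    using card_mono[of "Bk f ns k" "{f (k,0), f (k,1)}"] unfolding Bk_def by simp
  thus ?thesis using True by (simp add: cost2_def)
next
  case False
  have "card (Bk f ns k) = ns!k" unfolding Bk_def using card_image[OF lb_inj[OF fh k False]] by simp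
  thus ?thesis using s False by (simp add: cost2_def)
qed

lemma lb_family_sep: assumes fh: "full_hom (linear_forest ns) (path_graph n) f"
  and k: "k < length ns" "ns!k \<ge> 1" and k': "k' < length ns" "ns!k' \<ge> 1"
  and ne: "Bk f ns k \<noteq> Bk f ns k'"
  shows "sepd (Bk f ns k) (Bk f ns k')"
proof -
  have kk: "k \<noteq> k'" using ne by auto
  show ?thesis unfolding sepd_def
  proof (intro ballI)
    fix a b assume "a \<in> Bk f ns k" "b \<in> Bk f ns k'"
    then obtain i j where ij: "i < ns!k" "a = f (k,i)" "j < ns!k'" "b = f (k',j)" unfolding Bk_def by auto
    have s1: "f (k,i) \<noteq> Suc (f (k',j)) \<and> (f (k,i) = f (k',j) \<longrightarrow> ns!k = 1)"
      using lb_sep[OF fh k(1) ij(1) k'(1) ij(3) kk] .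
    have s2: "f (k',j) \<noteq> Suc (f (k,i)) \<and> (f (k',j) = f (k,i) \<longrightarrow> ns!k' = 1)"
      using lb_sep[OF fh k'(1) ij(3) k(1) ij(1)] kk by blast
    have "a \<noteq> b"
    proof
      assume "a = b"
      hence "ns!k = 1" "ns!k' = 1" using s1 s2 ij by auto
      hence "Bk f ns k = {a}" "Bk f ns k' = {b}" using ij unfolding Bk_def by auto
      thus False using ne \<open>a = b\<close> by simp
    qed
    thus "a \<noteq> b \<and> a \<noteq> Suc b \<and> b \<noteq> Suc a" using s1 s2 ij by simp
  qed
qed

lemma As_sum: "As ns = (\<Sum>k\<in>{k. k < length ns \<and> ns!k \<ge> 2}. cost2 (ns!k))"
proof -
  have "As ns = (\<Sum>k=0..<length ns. cost2 (ns!k))"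
    unfolding As_def by (simp add: sum_list_sum_nth)
  also have "\<dots> = (\<Sum>k\<in>{k. k < length ns \<and> ns!k \<ge> 2}. cost2 (ns!k))"
    by (rule sum.mono_neutral_right) (auto simp: cost2_def)
  finally show ?thesis .
qed

lemma IC_sum: "IC ns = (\<Sum>k\<in>{k. k < length ns \<and> ns!k \<ge> 1}. ns!k + 1)"
proof -
  have "IC ns = (\<Sum>k=0..<length ns. ic (ns!k))"
    unfolding IC_def by (simp add: sum_list_sum_nth)
  also have "\<dots> = (\<Sum>k\<in>{k. k < length ns \<and> ns!k \<ge> 1}. ic (ns!k))"
    by (rule sum.mono_neutral_right) (auto simp: ic_def)
  also have "\<dots> = (\<Sum>k\<in>{k. k < length ns \<and> ns!k \<ge> 1}. ns!k + 1)"
    by (rule sum.cong) (auto simp: ic_def)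
  finally show ?thesis .
qed

lemma col_lb: assumes fh: "full_hom (linear_forest ns) (path_graph n) f"
  shows "Nc ns \<le> n + 1"
proof -
  define K2 where "K2 = {k. k < length ns \<and> ns!k \<ge> 2}"
  define B where "B = Bk f ns"
  have Bne: "f (k,0) \<in> B k" if "k < length ns" "ns!k \<ge> 1" for k
    using that unfolding B_def Bk_def by auto
  have injB: "inj_on B K2"
  proof (rule inj_onI)
    fix k k' assume kk: "k \<in> K2" "k' \<in> K2" "B k = B k'"
    show "k = k'"
    proof (rule ccontr)
      assume ne: "k \<noteq> k'"
      have "f (k,0) \<in> B k'" using Bne[of k] kk unfolding K2_def by auto
      then obtain j where "j < ns!k'" "f (k,0) = f (k',j)" unfolding B_def Bk_def by auto
      hence "ns!k = 1" using lb_sep[OF fh _ _ _ _ ne, of 0 j] kk unfolding K2_def by auto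
      thus False using kk unfolding K2_def by simp
    qed
  qed
  have sepF: "sepd X Y" if "X \<in> B ` {k. k < length ns \<and> ns!k \<ge> 1}" "Y \<in> B ` {k. k < length ns \<and> ns!k \<ge> 1}" "X \<noteq> Y" for X Y
    using that lb_family_sep[OF fh] unfolding B_def by auto
  have memF: "X \<noteq> {} \<and> X \<subseteq> {..<n}" if "X \<in> B ` {k. k < length ns \<and> ns!k \<ge> 1}" for X
    using that lb_sub[OF fh] Bne unfolding B_def by blast
  have "As ns \<le> (\<Sum>k\<in>K2. card (B k) + 1)"
    unfolding As_sum K2_def[symmetric]
    by (rule sum_mono) (use lb_card[OF fh] in \<open>auto simp: K2_def B_def\<close>)
  also have "\<dots> = (\<Sum>X\<in>B ` K2. card X + 1)"
    using sum.reindex[OF injB, of "\<lambda>X. card X + 1"] by simp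
  finally have A1: "As ns \<le> (\<Sum>X\<in>B ` K2. card X + 1)" .
  show ?thesis
  proof (cases "C1 ns > 0")
    case False
    have "(\<Sum>X\<in>B ` K2. card X + 1) \<le> n + 1"
      by (rule sep_count) (use sepF memF in \<open>auto simp: K2_def\<close>)
    thus ?thesis using A1 False by (simp add: Nc_def)
  next
    case True
    then obtain k1 where k1: "k1 < length ns" "ns!k1 = 1" using C1_pos by (metis in_set_conv_nth)
    have Bk1: "B k1 = {f (k1,0)}" using k1 unfolding B_def Bk_def by auto
    have notin: "B k1 \<notin> B ` K2"
    proof
      assume "B k1 \<in> B ` K2"
      then obtain k where k: "k \<in> K2" "B k1 = B k" by auto
      have "f (k,0) \<in> B k1" using Bne[of k] k unfolding K2_def by auto
      hence "f (k,0) = f (k1,0)" using Bk1 by simp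
      moreover have "k \<noteq> k1" using k k1 unfolding K2_def by auto
      ultimately have "ns!k = 1" using lb_sep[OF fh _ _ _ _ \<open>k \<noteq> k1\<close>, of 0 0] k k1 unfolding K2_def by auto
      thus False using k unfolding K2_def by simp
    qed
    have "(\<Sum>X\<in>insert (B k1) (B ` K2). card X + 1) \<le> n + 1"
      by (rule sep_count) (use sepF memF k1 in \<open>auto simp: K2_def\<close>)
    moreover have "finite (B ` K2)" unfolding K2_def by simp
    ultimately have "2 + (\<Sum>X\<in>B ` K2. card X + 1) \<le> n + 1" using notin Bk1 by simp
    thus ?thesis using A1 True by (simp add: Nc_def)
  qed
qed

lemma inj_lb: assumes fh: "full_hom (linear_forest ns) (path_graph n) f"
  and inj: "inj_on f (verts (linear_forest ns))"
  shows "IC ns \<le> n + 1"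
proof -
  define K where "K = {k. k < length ns \<and> ns!k \<ge> 1}"
  define B where "B = Bk f ns"
  have Bne: "f (k,0) \<in> B k" if "k \<in> K" for k
    using that unfolding B_def Bk_def K_def by auto
  have finj: "k = k' \<and> i = j" if "f (k,i) = f (k',j)" "k < length ns" "i < ns!k" "k' < length ns" "j < ns!k'" for k i k' j
  proof -
    have "(k,i) \<in> verts (linear_forest ns)" "(k',j) \<in> verts (linear_forest ns)"
      using that by (simp_all add: verts_lf)
    from inj_onD[OF inj that(1) this] show ?thesis by simp
  qed
  have injB: "inj_on B K"
  proof (rule inj_onI)
    fix k k' assume kk: "k \<in> K" "k' \<in> K" "B k = B k'"
    have "f (k,0) \<in> B k'" using Bne[OF kk(1)] kk(3) by simp
    then obtain j where "j < ns!k'" "f (k,0) = f (k',j)" unfolding B_def Bk_def by auto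
    thus "k = k'" using finj[of k 0 k' j] kk unfolding K_def by auto
  qed
  have cardB: "card (B k) = ns!k" if "k \<in> K" for k
  proof -
    have "inj_on (\<lambda>i. f (k,i)) {..<ns!k}"
    proof (rule inj_onI)
      fix i j assume "i \<in> {..<ns!k}" "j \<in> {..<ns!k}" "f (k,i) = f (k,j)"
      thus "i = j" using finj[of k i k j] that unfolding K_def by simp
    qed
    thus ?thesis unfolding B_def Bk_def by (simp add: card_image)
  qed
  have sepF: "sepd X Y" if XY: "X \<in> B ` K" "Y \<in> B ` K" "X \<noteq> Y" for X Y
  proof -
    obtain k k' where "k \<in> K" "k' \<in> K" "X = B k" "Y = B k'" using XY(1,2) by blast
    thus ?thesis using lb_family_sep[OF fh, of k k'] XY(3) unfolding B_def K_def by simp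
  qed
  have memF: "X \<noteq> {} \<and> X \<subseteq> {..<n}" if XK: "X \<in> B ` K" for X
  proof -
    obtain k where "k \<in> K" "X = B k" using XK by blast
    thus ?thesis using lb_sub[OF fh, of k] Bne[of k] unfolding B_def K_def by auto
  qed
  have "(\<Sum>X\<in>B ` K. card X + 1) \<le> n + 1"
    by (rule sep_count) (use sepF memF in blast)+
  moreover have "(\<Sum>X\<in>B ` K. card X + 1) = (\<Sum>k\<in>K. card (B k) + 1)"
    using sum.reindex[OF injB, of "\<lambda>X. card X + 1"] by simp
  moreover have "\<dots> = IC ns" unfolding IC_sum K_def[symmetric]
    by (rule sum.cong) (simp_all add: cardB)
  ultimately show ?thesis by simp
qed

lemma mu_eq: "mu (linear_forest ns) = IC ns - 1"
  unfolding mu_def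
proof (rule Least_equality)
  show "\<exists>f. inj_on f (verts (linear_forest ns)) \<and> full_hom (linear_forest ns) (path_graph (IC ns - 1)) f"
    by (rule inj_constr) simp
next
  fix m assume "\<exists>f. inj_on f (verts (linear_forest ns)) \<and> full_hom (linear_forest ns) (path_graph m) f"
  thus "IC ns - 1 \<le> m" using inj_lb by fastforce
qed

lemma col_iff: "(\<exists>f. full_hom (linear_forest ns) (path_graph n) f) \<longleftrightarrow> Nc ns \<le> n + 1"
  using col_lb col_constr by blast



definition del :: "nat list \<Rightarrow> nat \<Rightarrow> nat \<Rightarrow> nat list" where
  "del ns k i = ns[k := i] @ [ns!k - 1 - i]"

lemma verts_del: assumes "k0 < length ns"
  shows "(k,j) \<in> verts (linear_forest (del ns k0 i0)) \<longleftrightarrow>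
    (k < length ns \<and> k \<noteq> k0 \<and> j < ns!k) \<or> (k = k0 \<and> j < i0) \<or> (k = length ns \<and> j < ns!k0 - 1 - i0)"
  using assms by (auto simp: verts_lf del_def nth_append nth_list_update less_Suc_eq)

lemma adj_del: assumes "k0 < length ns"
  shows "adj (linear_forest (del ns k0 i0)) (k,j) (k',j') \<longleftrightarrow> k' = k \<and> (j+1=j' \<or> j'+1=j) \<and>
    ((k < length ns \<and> k \<noteq> k0 \<and> j < ns!k \<and> j' < ns!k) \<or> (k = k0 \<and> j < i0 \<and> j' < i0) \<or>
     (k = length ns \<and> j < ns!k0 - 1 - i0 \<and> j' < ns!k0 - 1 - i0))"
  using assms by (auto simp: adj_lf del_def nth_append nth_list_update less_Suc_eq)

lemma del_iso:
  assumes k0: "k0 < length ns" and i0: "i0 < ns!k0"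
  defines "G \<equiv> induced_subgraph (linear_forest ns) (verts (linear_forest ns) - {(k0,i0)})"
  shows "full_hom G (linear_forest (del ns k0 i0)) (\<lambda>(k,j). if k = k0 \<and> i0 < j then (length ns, j - i0 - 1) else (k,j))"
    and "full_hom (linear_forest (del ns k0 i0)) G (\<lambda>(k,j). if k = length ns then (k0, j + i0 + 1) else (k,j))"
proof -
  have vG: "(k,j) \<in> verts G \<longleftrightarrow> k < length ns \<and> j < ns!k \<and> (k,j) \<noteq> (k0,i0)" for k j
    unfolding G_def by (auto simp: verts_ind verts_lf)
  have aG: "adj G (k,j) (k',j') \<longleftrightarrow> (k,j) \<noteq> (k0,i0) \<and> (k',j') \<noteq> (k0,i0) \<and> k < length ns \<and> k' = k \<and> j < ns!k \<and> j' < ns!k \<and> (j+1=j' \<or> j'+1=j)" for k j k' j'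
    unfolding G_def by (auto simp: adj_ind verts_lf adj_lf)
  show "full_hom G (linear_forest (del ns k0 i0)) (\<lambda>(k,j). if k = k0 \<and> i0 < j then (length ns, j - i0 - 1) else (k,j))"
    unfolding full_hom_def
  proof (intro conjI ballI)
    fix x assume "x \<in> verts G"
    then obtain k j where x: "x = (k,j)" "k < length ns" "j < ns!k" "(k,j) \<noteq> (k0,i0)" by (cases x) (auto simp: vG)
    thus "(case x of (k,j) \<Rightarrow> if k = k0 \<and> i0 < j then (length ns, j - i0 - 1) else (k,j)) \<in> verts (linear_forest (del ns k0 i0))"
      using k0 by (auto simp: verts_del)
  next
    fix x y assume "x \<in> verts G" "y \<in> verts G"
    then obtain k j k' j' where x: "x = (k,j)" "k < length ns" "j < ns!k" "(k,j) \<noteq> (k0,i0)"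
      and y: "y = (k',j')" "k' < length ns" "j' < ns!k'" "(k',j') \<noteq> (k0,i0)"
      by (cases x, cases y) (auto simp: vG)
    show "adj G x y \<longleftrightarrow> adj (linear_forest (del ns k0 i0))
        (case x of (k,j) \<Rightarrow> if k = k0 \<and> i0 < j then (length ns, j - i0 - 1) else (k,j))
        (case y of (k,j) \<Rightarrow> if k = k0 \<and> i0 < j then (length ns, j - i0 - 1) else (k,j))"
      using x y k0 i0 apply (cases "k = k0"; cases "k' = k0"; cases "i0 < j"; cases "i0 < j'")
      apply (simp_all add: aG adj_del)
      apply presburger+
      done
  qed
  show "full_hom (linear_forest (del ns k0 i0)) G (\<lambda>(k,j). if k = length ns then (k0, j + i0 + 1) else (k,j))"
    unfolding full_hom_def
  proof (intro conjI ballI)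
    fix x assume "x \<in> verts (linear_forest (del ns k0 i0))"
    then obtain k j where x: "x = (k,j)" "(k < length ns \<and> k \<noteq> k0 \<and> j < ns!k) \<or> (k = k0 \<and> j < i0) \<or> (k = length ns \<and> j < ns!k0 - 1 - i0)"
      by (cases x) (auto simp: verts_del[OF k0])
    thus "(case x of (k,j) \<Rightarrow> if k = length ns then (k0, j + i0 + 1) else (k,j)) \<in> verts G"
      using k0 i0 by (auto simp: vG)
  next
    fix x y assume "x \<in> verts (linear_forest (del ns k0 i0))" "y \<in> verts (linear_forest (del ns k0 i0))"
    then obtain k j k' j' where x: "x = (k,j)" "(k < length ns \<and> k \<noteq> k0 \<and> j < ns!k) \<or> (k = k0 \<and> j < i0) \<or> (k = length ns \<and> j < ns!k0 - 1 - i0)"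
      and y: "y = (k',j')" "(k' < length ns \<and> k' \<noteq> k0 \<and> j' < ns!k') \<or> (k' = k0 \<and> j' < i0) \<or> (k' = length ns \<and> j' < ns!k0 - 1 - i0)"
      by (cases x, cases y) (auto simp: verts_del[OF k0])
    show "adj (linear_forest (del ns k0 i0)) x y \<longleftrightarrow> adj G
        (case x of (k,j) \<Rightarrow> if k = length ns then (k0, j + i0 + 1) else (k,j))
        (case y of (k,j) \<Rightarrow> if k = length ns then (k0, j + i0 + 1) else (k,j))"
      using x y k0 i0 apply (cases "k = length ns"; cases "k' = length ns"; cases "k = k0"; cases "k' = k0")
      apply (simp_all add: aG adj_del)
      apply presburger+
      done
  qed
qed



lemma col_del:
  assumes "k0 < length ns" "i0 < ns!k0"
  shows "(\<exists>f. full_hom (induced_subgraph (linear_forest ns) (verts (linear_forest ns) - {(k0,i0)})) (path_graph n) f)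
     \<longleftrightarrow> Nc (del ns k0 i0) \<le> n + 1"
proof -
  have "(\<exists>f. full_hom (induced_subgraph (linear_forest ns) (verts (linear_forest ns) - {(k0,i0)})) (path_graph n) f)
     \<longleftrightarrow> (\<exists>f. full_hom (linear_forest (del ns k0 i0)) (path_graph n) f)"
    by (rule full_hom_transfer[OF del_iso(1)[OF assms] del_iso(2)[OF assms]])
  also have "\<dots> \<longleftrightarrow> Nc (del ns k0 i0) \<le> n + 1" by (rule col_iff)
  finally show ?thesis .
qed

lemma min_obs_iff:
  "min_obs (linear_forest ns) (path_graph n) \<longleftrightarrow>
     \<not> Nc ns \<le> n + 1 \<and> (\<forall>k < length ns. \<forall>i < ns!k. Nc (del ns k i) \<le> n + 1)"
proof
  assume m: "min_obs (linear_forest ns) (path_graph n)"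
  have m1: "\<not> (\<exists>f. full_hom (linear_forest ns) (path_graph n) f)" using m unfolding min_obs_def by (rule conjunct1)
  have m2: "\<And>S. S \<subset> verts (linear_forest ns) \<Longrightarrow> (\<exists>f. full_hom (induced_subgraph (linear_forest ns) S) (path_graph n) f)"
    using m unfolding min_obs_def by blast
  show "\<not> Nc ns \<le> n + 1 \<and> (\<forall>k < length ns. \<forall>i < ns!k. Nc (del ns k i) \<le> n + 1)"
  proof (intro conjI allI impI)
    show "\<not> Nc ns \<le> n + 1" using m1 col_iff[of ns n] by simp
  next
    fix k i assume ki: "k < length ns" "i < ns!k"
    have "(k,i) \<in> verts (linear_forest ns)" using ki by (simp add: verts_lf)
    hence "verts (linear_forest ns) - {(k,i)} \<subset> verts (linear_forest ns)" by blast
    from m2[OF this] show "Nc (del ns k i) \<le> n + 1" using col_del[OF ki, of n] by simp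
  qed
next
  assume a: "\<not> Nc ns \<le> n + 1 \<and> (\<forall>k < length ns. \<forall>i < ns!k. Nc (del ns k i) \<le> n + 1)"
  show "min_obs (linear_forest ns) (path_graph n)"
    unfolding min_obs_def
  proof (intro conjI allI impI)
    show "\<nexists>f. full_hom (linear_forest ns) (path_graph n) f" using a col_iff[of ns n] by simp
  next
    fix S assume S: "S \<subset> verts (linear_forest ns)"
    then obtain v where v: "v \<in> verts (linear_forest ns) - S" using psubset_imp_ex_mem by blast
    then obtain k i where ki: "v = (k,i)" "k < length ns" "i < ns!k" by (cases v) (simp add: verts_lf)
    have "Nc (del ns k i) \<le> n + 1" using a ki by simp
    hence "\<exists>f. full_hom (induced_subgraph (linear_forest ns) (verts (linear_forest ns) - {(k,i)})) (path_graph n) f"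
      using col_del[OF ki(2,3), of n] by simp
    then obtain f where f: "full_hom (induced_subgraph (linear_forest ns) (verts (linear_forest ns) - {(k,i)})) (path_graph n) f"
      by blast
    have "S \<subseteq> verts (linear_forest ns) - {(k,i)}" using S v ki(1) by blast
    from full_hom_comp[OF full_hom_sub[OF this] f]
    show "\<exists>f. full_hom (induced_subgraph (linear_forest ns) S) (path_graph n) f" by blast
  qed
qed



lemma sum_upd: "k < length xs \<Longrightarrow> sum_list (map h (xs[k:=a])) + h (xs!k) = sum_list (map h xs) + (h a :: nat)"
proof (induction xs arbitrary: k)
  case Nil thus ?case by simp
next
  case (Cons x xs) thus ?case by (cases k) auto
qed

lemma As_del: "k < length ns \<Longrightarrow> As (del ns k i) + cost2 (ns!k) = As ns + cost2 i + cost2 (ns!k - 1 - i)"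
  using sum_upd[of k ns cost2 i] by (simp add: As_def del_def)

lemma C1_del: "k < length ns \<Longrightarrow> C1 (del ns k i) + one (ns!k) = C1 ns + one i + one (ns!k - 1 - i)"
  using sum_upd[of k ns one i] by (simp add: C1_def del_def)

lemma count_C1: "count_list ns 1 = C1 ns"
  by (induction ns) (auto simp: C1_def one_def)

lemma ic_pt: "s \<in> {1,2,4,6} \<Longrightarrow> ic s = cost2 s + 2 * one s"
  by (auto simp: cost2_def ic_def one_def)

lemma IC_eq: "\<forall>s\<in>set ns. s \<in> {1,2,4,6} \<Longrightarrow> IC ns = As ns + 2 * C1 ns"
proof (induction ns)
  case Nil thus ?case by (simp add: IC_def As_def C1_def)
next
  case (Cons x xs)
  hence "ic x = cost2 x + 2 * one x" using ic_pt by simp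
  thus ?case using Cons by (simp add: IC_def As_def C1_def)
qed

lemma Nc_del: "k < length ns \<Longrightarrow> Nc (del ns k i) = As (del ns k i) + (if C1 (del ns k i) > 0 then 2 else 0)"
  by (simp add: Nc_def)

lemma cost_drop: assumes "s \<in> {2,4,6}" "i < s"
  shows "cost2 i + cost2 (s - 1 - i) + (if s = 6 then 1 else if s = 4 then 2 else 3) \<le> cost2 s"
proof -
  have "i = 0 \<or> i = 1 \<or> i = 2 \<or> i = 3 \<or> i = 4 \<or> i = 5" using assms by auto
  moreover have "s = 2 \<or> s = 4 \<or> s = 6" using assms by auto
  ultimately show ?thesis using assms(2)
    by (elim disjE) (simp_all add: cost2_def)
qed

lemma one_pos: assumes "C1 ns = 0" "k < length ns" shows "ns!k \<noteq> 1"
proof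
  assume h: "ns!k = 1"
  have "ns!k \<in> set ns" using nth_mem[OF assms(2)] .
  hence "1 \<in> set ns" using h by simp
  thus False using assms(1) C1_pos[of ns] by simp
qed



lemma delf:
  assumes "k < length ns"
  shows "As (del ns k i) + cost2 (ns!k) = As ns + cost2 i + cost2 (ns!k - 1 - i)"
    "C1 (del ns k i) + one (ns!k) = C1 ns + one i + one (ns!k - 1 - i)"
    "Nc (del ns k i) = As (del ns k i) + (if C1 (del ns k i) > 0 then 2 else 0)"
  using As_del[OF assms] C1_del[OF assms] by (simp_all add: Nc_def)

lemma get_idx: assumes "s \<in> set ns" obtains k where "k < length ns" "ns!k = s"
  using assms by (auto simp: in_set_conv_nth)

theorem proposition2p5:
  fixes ns :: "nat list" and n :: nat
  assumes "\<forall>k\<in>set ns. k \<ge> 1"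
    and "n \<ge> 1"
  shows "min_obs (linear_forest ns) (path_graph n) \<longleftrightarrow>
    ((mu (linear_forest ns) = n + 1 \<and> (\<forall>k\<in>set ns. k = 2))
     \<or> (mu (linear_forest ns) = n + 1 \<and> (\<forall>k\<in>set ns. k \<in> {1, 2, 4, 6}) \<and> count_list ns 1 = 1)
     \<or> (mu (linear_forest ns) = n + 2 \<and> (\<forall>k\<in>set ns. k \<in> {1, 2, 4}) \<and> count_list ns 1 = 1))"
proof -
  note pos = assms(1)
  have NcA: "Nc ns = As ns + (if C1 ns > 0 then 2 else 0)" by (simp add: Nc_def)
  have R: "(\<not> Nc ns \<le> n + 1 \<and> (\<forall>k < length ns. \<forall>i < ns!k. Nc (del ns k i) \<le> n + 1)) \<longleftrightarrow>
    ((IC ns - 1 = n + 1 \<and> (\<forall>k\<in>set ns. k = 2))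
     \<or> (IC ns - 1 = n + 1 \<and> (\<forall>k\<in>set ns. k \<in> {1, 2, 4, 6}) \<and> C1 ns = 1)
     \<or> (IC ns - 1 = n + 2 \<and> (\<forall>k\<in>set ns. k \<in> {1, 2, 4}) \<and> C1 ns = 1))"
  proof
    assume "\<not> Nc ns \<le> n + 1 \<and> (\<forall>k < length ns. \<forall>i < ns!k. Nc (del ns k i) \<le> n + 1)"
    hence H1: "Nc ns > n + 1" and H2: "\<And>k i. k < length ns \<Longrightarrow> i < ns!k \<Longrightarrow> Nc (del ns k i) \<le> n + 1"
      by auto
    have c1: "C1 ns \<le> 1"
    proof (rule ccontr)
      assume c2: "\<not> C1 ns \<le> 1"
      hence "1 \<in> set ns" using C1_pos[of ns] by simp
      then obtain k where k: "k < length ns" "ns!k = 1" by (rule get_idx)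
      have "Nc (del ns k 0) \<le> n + 1" using H2[OF k(1)] k(2) by simp
      moreover note f = delf[OF k(1), of 0]
      ultimately show False using H1 c2 k(2) NcA by (simp add: cost2_def one_def split: if_split_asm)
    qed
    have sv: "\<forall>s\<in>set ns. s \<in> {1,2,4,6}"
    proof
      fix s assume s: "s \<in> set ns"
      then obtain k where k: "k < length ns" "ns!k = s" by (rule get_idx)
      have s1: "s \<ge> 1" using pos s by auto
      show "s \<in> {1,2,4,6}"
      proof (rule ccontr)
        assume bad: "s \<notin> {1,2,4,6}"
        have cases3: "s = 3 \<or> s = 5 \<or> s \<ge> 7" using bad s1 by auto
        obtain i where iS: "i < s" and cs: "cost2 s \<le> cost2 i + cost2 (s - 1 - i)"
          and os: "one s = 0" "one i = 0" "one (s - 1 - i) = 0"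
        proof (cases "s = 3")
          case True thus ?thesis using that[of 0] by (simp add: cost2_def one_def)
        next
          case False
          hence s5: "s \<ge> 5" using cases3 by auto
          have "cost2 s \<le> cost2 2 + cost2 (s - 1 - 2)"
          proof (cases "s = 5")
            case True thus ?thesis by (simp add: cost2_def)
          next
            case False hence "s \<ge> 7" using cases3 s5 by auto
            thus ?thesis by (auto simp: cost2_def)
          qed
          moreover have "one s = 0" "one 2 = 0" "one (s - 1 - 2) = 0" using s5 by (simp_all add: one_def)
          ultimately show ?thesis using that[of 2] s5 by simp
        qed
        note f = delf[OF k(1), of i]
        have Nd: "Nc (del ns k i) \<le> n + 1" using H2[OF k(1)] k(2) iS by simp
        have A': "As ns \<le> As (del ns k i)" using f(1) k(2) cs by simp
        have C': "C1 (del ns k i) = C1 ns" using f(2) k(2) os by simp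
        have "Nc ns \<le> Nc (del ns k i)" using f(3) NcA A' C' by simp
        thus False using Nd H1 by simp
      qed
    qed
    have all2: "\<forall>s\<in>set ns. s = 2" if c0: "C1 ns = 0"
    proof
      fix s assume s: "s \<in> set ns"
      then obtain k where k: "k < length ns" "ns!k = s" by (rule get_idx)
      have "s \<noteq> 1" using one_pos[OF c0 k(1)] k(2) by simp
      show "s = 2"
      proof (rule ccontr)
        assume "s \<noteq> 2"
        hence s46: "s = 4 \<or> s = 6" using sv s \<open>s \<noteq> 1\<close> by auto
        have cs: "cost2 s \<le> cost2 1 + cost2 (s - 1 - 1) + 2" using s46 by (auto simp: cost2_def)
        have os: "one s = 0" "one 1 = 1" using s46 by (auto simp: one_def)
        have "Nc (del ns k 1) \<le> n + 1" using H2[OF k(1)] k(2) s46 by auto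
        moreover note f = delf[OF k(1), of 1]
        ultimately show False using H1 NcA k(2) cs os c0 by (auto split: if_split_asm)
      qed
    qed
    have ICN: "IC ns = Nc ns" using IC_eq[OF sv] NcA c1 by auto
    have ne: "ns \<noteq> []" using H1 by (auto simp: Nc_def As_def C1_def)
    show "(IC ns - 1 = n + 1 \<and> (\<forall>k\<in>set ns. k = 2))
     \<or> (IC ns - 1 = n + 1 \<and> (\<forall>k\<in>set ns. k \<in> {1, 2, 4, 6}) \<and> C1 ns = 1)
     \<or> (IC ns - 1 = n + 2 \<and> (\<forall>k\<in>set ns. k \<in> {1, 2, 4}) \<and> C1 ns = 1)"
    proof (cases "C1 ns = 0")
      case True
      have a2: "\<forall>s\<in>set ns. s = 2" using all2[OF True] .
      have k0: "0 < length ns" using ne by simp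
      have "ns!0 = 2" using a2 nth_mem[OF k0] by blast
      have "Nc (del ns 0 0) \<le> n + 1" using H2[OF k0] \<open>ns!0 = 2\<close> by simp
      moreover note f = delf[OF k0, of 0]
      ultimately have "Nc ns \<le> n + 2" using NcA True \<open>ns!0 = 2\<close>
        by (simp add: cost2_def one_def split: if_split_asm)
      hence "IC ns - 1 = n + 1" using ICN H1 by simp
      thus ?thesis using a2 by simp
    next
      case False
      hence c11: "C1 ns = 1" using c1 by simp
      show ?thesis
      proof (cases "6 \<in> set ns")
        case True
        then obtain k where k: "k < length ns" "ns!k = 6" by (rule get_idx)
        have "Nc (del ns k 0) \<le> n + 1" using H2[OF k(1)] k(2) by simp
        moreover note f = delf[OF k(1), of 0]
        ultimately have "Nc ns \<le> n + 2" using NcA c11 k(2)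
          by (simp add: cost2_def one_def split: if_split_asm)
        hence "IC ns - 1 = n + 1" using ICN H1 by simp
        thus ?thesis using sv c11 by simp
      next
        case False
        have "1 \<in> set ns" using c11 C1_pos[of ns] by simp
        then obtain k where k: "k < length ns" "ns!k = 1" by (rule get_idx)
        have "Nc (del ns k 0) \<le> n + 1" using H2[OF k(1)] k(2) by simp
        moreover note f = delf[OF k(1), of 0]
        ultimately have "Nc ns \<le> n + 3" using NcA c11 k(2)
          by (simp add: cost2_def one_def split: if_split_asm)
        hence "IC ns - 1 = n + 1 \<or> IC ns - 1 = n + 2" using ICN H1 by auto
        moreover have "\<forall>k\<in>set ns. k \<in> {1, 2, 4}" using sv False by auto
        ultimately show ?thesis using sv c11 by auto
      qed
    qed
  next
    assume rhs: "(IC ns - 1 = n + 1 \<and> (\<forall>k\<in>set ns. k = 2))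
     \<or> (IC ns - 1 = n + 1 \<and> (\<forall>k\<in>set ns. k \<in> {1, 2, 4, 6}) \<and> C1 ns = 1)
     \<or> (IC ns - 1 = n + 2 \<and> (\<forall>k\<in>set ns. k \<in> {1, 2, 4}) \<and> C1 ns = 1)"
    have sv: "\<forall>s\<in>set ns. s \<in> {1,2,4,6}" using rhs by auto
    have c1: "C1 ns \<le> 1"
    proof -
      have "C1 ns = 0" if "\<forall>k\<in>set ns. k = 2"
      proof -
        have "1 \<notin> set ns" using that by auto
        thus ?thesis using C1_pos[of ns] by simp
      qed
      thus ?thesis using rhs by auto
    qed
    have ICN: "IC ns = Nc ns" using IC_eq[OF sv] NcA c1 by auto
    show "\<not> Nc ns \<le> n + 1 \<and> (\<forall>k < length ns. \<forall>i < ns!k. Nc (del ns k i) \<le> n + 1)"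
    proof (intro conjI allI impI)
      show "\<not> Nc ns \<le> n + 1" using rhs ICN by auto
    next
      fix k i assume k: "k < length ns" and i: "i < ns!k"
      note f = delf[OF k, of i]
      have skin: "ns!k \<in> {1,2,4,6}" using sv nth_mem[OF k] by blast
      show "Nc (del ns k i) \<le> n + 1"
      proof (cases "ns!k = 1")
        case True
        hence "1 \<in> set ns" using nth_mem[OF k] by simp
        hence "C1 ns = 1" using c1 C1_pos[of ns] by simp
        moreover have "i = 0" using i True by simp
        moreover have "\<not> (\<forall>k\<in>set ns. k = 2)"
        proof
          assume "\<forall>k\<in>set ns. k = 2"
          hence "(1::nat) = 2" using \<open>1 \<in> set ns\<close> by blast
          thus False by simp
        qed
        moreover have "IC ns \<le> n + 3" using rhs by auto
        ultimately show ?thesis using f True ICN NcA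
          by (simp add: cost2_def one_def split: if_split_asm)
      next
        case False
        hence s246: "ns!k \<in> {2,4,6}" using skin by auto
        have cd: "cost2 i + cost2 (ns!k - 1 - i) + (if ns!k = 6 then 1 else if ns!k = 4 then 2 else 3) \<le> cost2 (ns!k)"
          using cost_drop[OF s246 i] .
        have o1: "one (ns!k) = 0" using False by (simp add: one_def)
        consider (a) "IC ns - 1 = n + 1" "\<forall>k\<in>set ns. k = 2"
          | (b) "IC ns - 1 = n + 1" "C1 ns = 1"
          | (c) "IC ns - 1 = n + 2" "\<forall>k\<in>set ns. k \<in> {1, 2, 4}" "C1 ns = 1"
          using rhs by blast
        thus ?thesis
        proof cases
          case a
          hence "ns!k = 2" using nth_mem[OF k] by blast
          moreover have "1 \<notin> set ns" using a(2) by auto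
          hence "C1 ns = 0" using C1_pos[of ns] by simp
          ultimately show ?thesis using f cd a(1) ICN NcA o1 by (auto split: if_split_asm)
        next
          case b
          thus ?thesis using f cd ICN NcA o1 by (auto split: if_split_asm)
        next
          case c
          hence "ns!k \<noteq> 6" using nth_mem[OF k] by fastforce
          thus ?thesis using c f cd ICN NcA o1 by (auto split: if_split_asm)
        qed
      qed
    qed
  qed
  show ?thesis using R unfolding min_obs_iff mu_eq count_C1 .
qed



end
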